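(* Consider the protocol $P_{RL}$ with parameter $N$ on a directed ring of size $n$ with $2\le n\le N$. Let $\mathcal{S}_{RL}$ be the set of configurations in $\mathcal{C}_{NI}$ (defined in the context) in which exactly one agent is a leader. Then $\mathcal{S}_{RL}$ is closed (no configuration outside $\mathcal{S}_{RL}$ is reachable from a configuration in $\mathcal{S}_{RL}$), and every configuration in $\mathcal{S}_{RL}$ is safe.
   Context: Model. A population is a directed ring of $n\ge 2$ anonymous agents $u_0,\dots,u_{n-1}$ (indices modulo $n$) with arcs $e_i=(u_i,u_{i+1})$. A configuration $C$ assigns a state to each agent; $C\to C'$ means that $C'$ is obtained from $C$ by one interaction on some arc $e_i$, in which initiator $u_i$ and responder $u_{i+1}$ update their states by the transition function and all other agents keep their states. A configuration is reachable from $C$ if it is obtained from $C$ by finitely many such steps. A configuration $C$ is safe if (i) exactly one agent outputs $L$ and all others output $F$ in $C$, and (ii) in every configuration reachable from $C$ each agent has the same output as in $C$. Protocol $P_{RL}$ (parameter $N$). Each agent has variables $\mathit{leader}\in\{0,1\}$, $\mathit{bullet}\in\{0,1,2\}$, $\mathit{shield}\in\{0,1\}$, $\mathit{signal}\in\{0,1\}$, $\mathit{dist}\in\{0,\dots,N\}$; it outputs $L$ if $\mathit{leader}=1$ (leader) and $F$ otherwise (follower). In an interaction with initiator $l$ and responder $r$ the following are executed in order: 1. If $l.\mathit{leader}=1$ then $l.\mathit{dist}\gets 0$. 2. If $r.\mathit{leader}=1$ then $r.\mathit{dist}\gets 0$; else if $r.\mathit{bullet}=0$ then $r.\mathit{dist}\gets\min(l.\mathit{dist}+1,N)$.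 3. If $r.\mathit{dist}=N$ then $r.\mathit{leader}\gets1$, $r.\mathit{bullet}\gets2$, $r.\mathit{shield}\gets1$, $r.\mathit{signal}\gets0$, $r.\mathit{dist}\gets0$. 4. If $l.\mathit{leader}=1$ and $l.\mathit{signal}=1$ then $l.\mathit{bullet}\gets2$, $l.\mathit{shield}\gets1$, $l.\mathit{signal}\gets0$. 5. If $r.\mathit{leader}=1$ and $r.\mathit{signal}=1$ then $r.\mathit{bullet}\gets1$, $r.\mathit{shield}\gets0$, $r.\mathit{signal}\gets0$. 6. If $l.\mathit{bullet}>0$ and $r.\mathit{leader}=1$: set $r.\mathit{leader}\gets0$ if ($l.\mathit{bullet}=2$ and $r.\mathit{shield}=0$); then $l.\mathit{bullet}\gets0$. Else, if $l.\mathit{bullet}>0$ and $r.\mathit{leader}=0$: if $r.\mathit{bullet}=0$ then $r.\mathit{bullet}\gets l.\mathit{bullet}$; then $l.\mathit{bullet}\gets0$ and $r.\mathit{signal}\gets0$. 7. $l.\mathit{signal}\gets\max(l.\mathit{signal},r.\mathit{signal},r.\mathit{leader})$. Definitions (in a configuration with at least one leader). $\mathrm{dist}_L(i)=\min\{j\ge0: u_{i-j}.\mathit{leader}=1\}$ and $\mathrm{dist}_R(i)=\min\{j\ge0: u_{i+j}.\mathit{leader}=1\}$. $\mathrm{peaceful}(i)$ holds iff $u_{i-\mathrm{dist}_L(i)}.\mathit{shield}=1$ and $u_{i-j}.\mathit{signal}=0$ for all $0\le j\le\mathrm{dist}_L(i)$. $\mathrm{modest}(i)$ holds iff $\mathrm{peaceful}(i)$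 holds and $u_{i-j}.\mathit{dist}\le\mathrm{dist}_L(i-j)$ for all $0\le j\le\mathrm{dist}_L(i)$. $\mathrm{secure}(i)$ holds iff $u_i.\mathit{dist}=0$ when $u_i.\mathit{leader}=1$, and $u_i.\mathit{dist}\le N-\mathrm{dist}_R(i)$ when $u_i.\mathit{leader}=0$. $\mathcal{C}_{PB}$ is the set of configurations with at least one leader in which every $u_j$ with $u_j.\mathit{bullet}=2$ satisfies $\mathrm{peaceful}(j)$. $\mathcal{C}_{NI}$ is the set of configurations in $\mathcal{C}_{PB}$ in which every agent $u_i$ satisfies $\mathrm{secure}(i)$ and every $u_j$ with $u_j.\mathit{bullet}=2$ satisfies $\mathrm{modest}(j)$. *)

theory Defs
  imports Main
begin

text \<open>State of an agent of protocol P_RL. leader, shield, signal are 0/1 flags,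
  rendered as booleans (1 = True). bullet ranges over {0,1,2} and dist over {0..N};
  the range constraints are imposed by valid_state.\<close>

record agent =
  leader :: bool
  bullet :: nat
  shield :: bool
  signal :: bool
  dist   :: nat

definition valid_state :: "nat \<Rightarrow> agent \<Rightarrow> bool" where
  "valid_state N s \<longleftrightarrow> bullet s \<le> 2 \<and> dist s \<le> N"

text \<open>A configuration of a ring of size n: agent u_i is C i for i < n
  (values at indices \<ge> n are irrelevant).\<close>
type_synonym config = "nat \<Rightarrow> agent"

definition valid_config :: "nat \<Rightarrow> nat \<Rightarrow> config \<Rightarrow> bool" where
  "valid_config n N C \<longleftrightarrow> (\<forall>i<n. valid_state N (C i))"

definition step1 :: "agent \<times> agent \<Rightarrow> agent \<times> agent" where
  "step1 = (\<lambda>(l, r). (if leader l then l\<lparr>dist := 0\<rparr> else l, r))"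

definition step2 :: "nat \<Rightarrow> agent \<times> agent \<Rightarrow> agent \<times> agent" where
  "step2 N = (\<lambda>(l, r).
     (l, if leader r then r\<lparr>dist := 0\<rparr>
         else if bullet r = 0 then r\<lparr>dist := min (dist l + 1) N\<rparr> else r))"

definition step3 :: "nat \<Rightarrow> agent \<times> agent \<Rightarrow> agent \<times> agent" where
  "step3 N = (\<lambda>(l, r).
     (l, if dist r = N then r\<lparr>leader := True, bullet := 2, shield := True,
                               signal := False, dist := 0\<rparr> else r))"

definition step4 :: "agent \<times> agent \<Rightarrow> agent \<times> agent" where
  "step4 = (\<lambda>(l, r).
     (if leader l \<and> signal l then l\<lparr>bullet := 2, shield := True, signal := False\<rparr> else l, r))"

definition step5 :: "agent \<times> agent \<Rightarrow> agent \<times> agent" where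
  "step5 = (\<lambda>(l, r).
     (l, if leader r \<and> signal r then r\<lparr>bullet := 1, shield := False, signal := False\<rparr> else r))"

definition step6 :: "agent \<times> agent \<Rightarrow> agent \<times> agent" where
  "step6 = (\<lambda>(l, r).
     if bullet l > 0 \<and> leader r then
       (l\<lparr>bullet := 0\<rparr>,
        if bullet l = 2 \<and> \<not> shield r then r\<lparr>leader := False\<rparr> else r)
     else if bullet l > 0 \<and> \<not> leader r then
       (l\<lparr>bullet := 0\<rparr>,
        (if bullet r = 0 then r\<lparr>bullet := bullet l\<rparr> else r)\<lparr>signal := False\<rparr>)
     else (l, r))"

definition step7 :: "agent \<times> agent \<Rightarrow> agent \<times> agent" where
  "step7 = (\<lambda>(l, r). (l\<lparr>signal := (signal l \<or> signal r \<or> leader r)\<rparr>, r))"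

definition delta :: "nat \<Rightarrow> agent \<Rightarrow> agent \<Rightarrow> agent \<times> agent" where
  "delta N l r = (step7 \<circ> step6 \<circ> step5 \<circ> step4 \<circ> step3 N \<circ> step2 N \<circ> step1) (l, r)"

definition ring_step :: "nat \<Rightarrow> nat \<Rightarrow> config \<Rightarrow> config \<Rightarrow> bool" where
  "ring_step n N C C' \<longleftrightarrow>
     (\<exists>i<n. C' = C(i := fst (delta N (C i) (C (Suc i mod n))),
                   Suc i mod n := snd (delta N (C i) (C (Suc i mod n)))))"

definition reachable :: "nat \<Rightarrow> nat \<Rightarrow> config \<Rightarrow> config \<Rightarrow> bool" where
  "reachable n N = (ring_step n N)\<^sup>*\<^sup>*"

definition at :: "nat \<Rightarrow> config \<Rightarrow> int \<Rightarrow> agent" where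
  "at n C k = C (nat (k mod int n))"

definition has_leader :: "nat \<Rightarrow> config \<Rightarrow> bool" where
  "has_leader n C \<longleftrightarrow> (\<exists>i<n. leader (C i))"

definition distL :: "nat \<Rightarrow> config \<Rightarrow> int \<Rightarrow> nat" where
  "distL n C i = (LEAST j. leader (at n C (i - int j)))"

definition distR :: "nat \<Rightarrow> config \<Rightarrow> int \<Rightarrow> nat" where
  "distR n C i = (LEAST j. leader (at n C (i + int j)))"

definition peaceful :: "nat \<Rightarrow> config \<Rightarrow> int \<Rightarrow> bool" where
  "peaceful n C i \<longleftrightarrow>
     shield (at n C (i - int (distL n C i))) \<and>
     (\<forall>j\<le>distL n C i. \<not> signal (at n C (i - int j)))"

definition modest :: "nat \<Rightarrow> config \<Rightarrow> int \<Rightarrow> bool" where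
  "modest n C i \<longleftrightarrow> peaceful n C i \<and>
     (\<forall>j\<le>distL n C i. dist (at n C (i - int j)) \<le> distL n C (i - int j))"

definition secure :: "nat \<Rightarrow> nat \<Rightarrow> config \<Rightarrow> int \<Rightarrow> bool" where
  "secure n N C i \<longleftrightarrow>
     (if leader (at n C i) then dist (at n C i) = 0
      else int (dist (at n C i)) \<le> int N - int (distR n C i))"

definition C_PB :: "nat \<Rightarrow> config set" where
  "C_PB n = {C. has_leader n C \<and>
     (\<forall>j<n. bullet (C j) = 2 \<longrightarrow> peaceful n C (int j))}"

definition C_NI :: "nat \<Rightarrow> nat \<Rightarrow> config set" where
  "C_NI n N = {C. C \<in> C_PB n \<and> (\<forall>i<n. secure n N C (int i)) \<and>
     (\<forall>j<n. bullet (C j) = 2 \<longrightarrow> modest n C (int j))}"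

definition S_RL :: "nat \<Rightarrow> nat \<Rightarrow> config set" where
  "S_RL n N = {C. valid_config n N C \<and> C \<in> C_NI n N \<and> card {i. i < n \<and> leader (C i)} = 1}"

definition closed_set :: "nat \<Rightarrow> nat \<Rightarrow> config set \<Rightarrow> bool" where
  "closed_set n N S \<longleftrightarrow> (\<forall>C\<in>S. \<forall>C'. reachable n N C C' \<longrightarrow> C' \<in> S)"

definition safe :: "nat \<Rightarrow> nat \<Rightarrow> config \<Rightarrow> bool" where
  "safe n N C \<longleftrightarrow> card {i. i < n \<and> leader (C i)} = 1 \<and>
     (\<forall>C'. reachable n N C C' \<longrightarrow> (\<forall>i<n. leader (C' i) = leader (C i)))"

end

theory Submission
  imports Defs
begin


lemma delta_A:
  assumes "leader r" "\<not> leader l" "N \<noteq> 0" "bullet l = 2 \<longrightarrow> shield r \<and> \<not> signal r"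
  shows "fst (delta N l r) = l\<lparr>bullet := 0, signal := True\<rparr>"
    "snd (delta N l r) = r\<lparr>dist := 0, bullet := (if signal r then 1 else bullet r),
        shield := (shield r \<and> \<not> signal r), signal := False\<rparr>"
  using assms by (auto simp: delta_def step1_def step2_def step3_def step4_def step5_def step6_def step7_def)

lemma delta_B0:
  assumes "leader l" "\<not> leader r" "(if bullet r = 0 then min 1 N else dist r) \<noteq> N"
  shows "fst (delta N l r) = l\<lparr>bullet := 0, shield := (shield l \<or> signal l), signal := (\<not> signal l \<and> bullet l = 0 \<and> signal r), dist := 0\<rparr>"
    "snd (delta N l r) = r\<lparr>bullet := (if bullet r = 0 then (if signal l then 2 else bullet l) else bullet r),
        signal := (signal r \<and> \<not> signal l \<and> bullet l = 0), dist := (if bullet r = 0 then min 1 N else dist r)\<rparr>"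
  using assms by (auto simp: delta_def step1_def step2_def step3_def step4_def step5_def step6_def step7_def)

lemma delta_B:
  assumes "\<not> leader l" "\<not> leader r" "(if bullet r = 0 then min (dist l + 1) N else dist r) \<noteq> N"
  shows "fst (delta N l r) = l\<lparr>bullet := 0, signal := (signal l \<or> (bullet l = 0 \<and> signal r))\<rparr>"
    "snd (delta N l r) = r\<lparr>bullet := (if bullet r = 0 then bullet l else bullet r),
        signal := (signal r \<and> bullet l = 0), dist := (if bullet r = 0 then min (dist l + 1) N else dist r)\<rparr>"
  using assms by (auto simp: delta_def step1_def step2_def step3_def step4_def step5_def step6_def step7_def)



definition GoodR :: "nat \<Rightarrow> nat \<Rightarrow> config \<Rightarrow> bool" where
"GoodR n N D \<longleftrightarrow> (\<forall>k<n. leader (D k) \<longleftrightarrow> k = 0) \<and> (\<forall>k<n. bullet (D k) \<le> 2 \<and> dist (D k) \<le> N)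
  \<and> dist (D 0) = 0 \<and> (\<forall>k<n. 0 < k \<longrightarrow> dist (D k) + n \<le> N + k)
  \<and> (\<forall>k<n. bullet (D k) = 2 \<longrightarrow> shield (D 0) \<and> (\<forall>j\<le>k. \<not> signal (D j) \<and> dist (D j) \<le> j))"

lemma GoodR_A:
  assumes G: "GoodR n N D" and n: "2 \<le> n" "n \<le> N"
  shows "GoodR n N (D(n - 1 := fst (delta N (D (n - 1)) (D 0)), 0 := snd (delta N (D (n - 1)) (D 0))))"
proof -
  have l: "\<not> leader (D (n - 1))" "leader (D 0)" using G n unfolding GoodR_def by auto
  have c: "bullet (D (n - 1)) = 2 \<longrightarrow> shield (D 0) \<and> \<not> signal (D 0)" using G n unfolding GoodR_def
    by (metis diff_less le0 less_numeral_extra(1) order_less_le_trans zero_less_numeral)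
  note e = delta_A[OF l(2) l(1) _ c]
  have N0: "N \<noteq> 0" using n by auto
  have A: "\<forall>k<n. 0<k \<longrightarrow> dist (D k) + n \<le> N + k" and B: "\<forall>k<n. bullet (D k) = 2 \<longrightarrow> shield (D 0)"
    using G unfolding GoodR_def by blast+
  have d: "dist (D (n - 1)) + n \<le> N + (n - 1)" "bullet (D 0) = 2 \<longrightarrow> shield (D 0)"
    using A[rule_format, of "n - 1"] B[rule_format, of 0] n by auto
  show ?thesis using G n d unfolding GoodR_def e[OF N0] 
    by (auto simp: fun_upd_def)
qed

lemma GoodR_B0:
  assumes G: "GoodR n N D" and n: "2 \<le> n" "n \<le> N"
  shows "GoodR n N (D(0 := fst (delta N (D 0) (D 1)), 1 := snd (delta N (D 0) (D 1))))"
proof -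
  have l: "leader (D 0)" "\<not> leader (D 1)" using G n unfolding GoodR_def by auto
  have A: "\<forall>k<n. 0<k \<longrightarrow> dist (D k) + n \<le> N + k" and B: "\<forall>k<n. bullet (D k) = 2 \<longrightarrow> shield (D 0)"
    and S: "\<forall>k<n. bullet (D k) = 2 \<longrightarrow> (\<forall>j\<le>k. \<not> signal (D j) \<and> dist (D j) \<le> j)"
    using G unfolding GoodR_def by blast+
  have S': "\<And>m j. bullet (D m) = 2 \<Longrightarrow> m < n \<Longrightarrow> j \<le> m \<Longrightarrow> \<not> signal (D j) \<and> dist (D j) \<le> j"
    and B': "\<And>m. bullet (D m) = 2 \<Longrightarrow> m < n \<Longrightarrow> shield (D 0)" using S B by blast+
  have d: "dist (D 1) + n \<le> N + 1" "bullet (D 0) = 2 \<longrightarrow> shield (D 0)"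
    using A[rule_format, of 1] B[rule_format, of 0] n by auto
  have c: "(if bullet (D 1) = 0 then min 1 N else dist (D 1)) \<noteq> N" using d n by auto
  have s1: "bullet (D k) = 2 \<Longrightarrow> k < n \<Longrightarrow> 1 \<le> k \<Longrightarrow> \<not> signal (D 0) \<and> \<not> signal (D 1) \<and> dist (D 1) \<le> 1" for k
    using S[rule_format, of k 0] S[rule_format, of k 1] by auto
  have s0: "bullet (D 0) = 2 \<Longrightarrow> \<not> signal (D 0)" using S[rule_format, of 0 0] n by auto
  have s11: "bullet (D 1) = 2 \<Longrightarrow> \<not> signal (D 0) \<and> \<not> signal (D 1) \<and> dist (D 1) \<le> 1" using s1[of 1] n by auto
  note e = delta_B0[OF l c]
  show ?thesis using G n d s1 s0 s11 S' B' unfolding GoodR_def e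
    by (auto simp: fun_upd_def)
qed

lemma GoodR_B:
  assumes G: "GoodR n N D" and n: "2 \<le> n" "n \<le> N" and k: "0 < k" "Suc k < n"
  shows "GoodR n N (D(k := fst (delta N (D k) (D (Suc k))), Suc k := snd (delta N (D k) (D (Suc k)))))"
proof -
  have l: "\<not> leader (D k)" "\<not> leader (D (Suc k))" using G n k unfolding GoodR_def by auto
  have A: "\<forall>k<n. 0<k \<longrightarrow> dist (D k) + n \<le> N + k" and B: "\<forall>k<n. bullet (D k) = 2 \<longrightarrow> shield (D 0)"
    and S: "\<forall>k<n. bullet (D k) = 2 \<longrightarrow> (\<forall>j\<le>k. \<not> signal (D j) \<and> dist (D j) \<le> j)"
    using G unfolding GoodR_def by blast+
  have S': "\<And>m j. bullet (D m) = 2 \<Longrightarrow> m < n \<Longrightarrow> j \<le> m \<Longrightarrow> \<not> signal (D j) \<and> dist (D j) \<le> j"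
    and B': "\<And>m. bullet (D m) = 2 \<Longrightarrow> m < n \<Longrightarrow> shield (D 0)" using S B by blast+
  have d: "dist (D k) + n \<le> N + k" "dist (D (Suc k)) + n \<le> N + Suc k"
    using A[rule_format, of k] A[rule_format, of "Suc k"] n k by auto
  have c: "(if bullet (D (Suc k)) = 0 then min (dist (D k) + 1) N else dist (D (Suc k))) \<noteq> N" using d n k by auto
  have s1: "bullet (D m) = 2 \<Longrightarrow> m < n \<Longrightarrow> k \<le> m \<Longrightarrow> \<not> signal (D k) \<and> dist (D k) \<le> k" for m
    using S[rule_format, of m k] by auto
  have s2: "bullet (D m) = 2 \<Longrightarrow> m < n \<Longrightarrow> Suc k \<le> m \<Longrightarrow> \<not> signal (D (Suc k)) \<and> dist (D (Suc k)) \<le> Suc k" for m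
    using S[rule_format, of m "Suc k"] by auto
  have f1: "min (Suc (dist (D k))) N + n \<le> Suc (N + k)" using d by auto
  have f2: "bullet (D m) = 2 \<Longrightarrow> m < n \<Longrightarrow> k \<le> m \<Longrightarrow> min (Suc (dist (D k))) N \<le> Suc k" for m
    using s1[of m] by auto
  note e = delta_B[OF l c]
  show ?thesis using G n k d s1 s2 S' B' f1 f2 unfolding GoodR_def e
    by (auto simp: fun_upd_def)
qed

definition rot :: "nat \<Rightarrow> nat \<Rightarrow> config \<Rightarrow> config" where
  "rot n p C = (\<lambda>k. C ((p + k) mod n))"

definition posx :: "nat \<Rightarrow> nat \<Rightarrow> int \<Rightarrow> nat" where
  "posx n p x = nat ((x - int p) mod int n)"

lemma posx_lt: "0 < n \<Longrightarrow> posx n p x < n"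
  unfolding posx_def by (simp add: nat_less_iff)

lemma at_rot: assumes "0 < n" shows "at n C x = rot n p C (posx n p x)"
proof -
  have "int ((p + posx n p x) mod n) = (int p + (x - int p) mod int n) mod int n"
    unfolding posx_def using assms by (simp add: zmod_int)
  also have "\<dots> = x mod int n" by (simp add: mod_add_right_eq)
  finally have "(p + posx n p x) mod n = nat (x mod int n)" by linarith
  then show ?thesis unfolding at_def rot_def by simp
qed

lemma posx_rot: assumes "0 < n" "k < n" shows "posx n p (int ((p + k) mod n)) = k"
proof -
  have "(int ((p + k) mod n) - int p) mod int n = (int p + int k - int p) mod int n"
    by (simp add: zmod_int mod_diff_left_eq)
  also have "\<dots> = int k" using assms by simp
  finally show ?thesis unfolding posx_def by simp
qed

lemma posx_minus: assumes "0 < n" "t \<le> posx n p x" shows "posx n p (x - int t) = posx n p x - t"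
proof -
  have a: "int (posx n p x) = (x - int p) mod int n" unfolding posx_def using assms by simp
  have lt: "int (posx n p x) < int n" using posx_lt assms by auto
  have tt: "int t \<le> int (posx n p x)" using assms by simp
  have "(x - int t - int p) mod int n = ((x - int p) mod int n - int t) mod int n"
    by (simp add: mod_diff_left_eq algebra_simps)
  also have "\<dots> = (x - int p) mod int n - int t"
    using a lt tt by (intro mod_pos_pos_trivial) linarith+
  finally show ?thesis unfolding posx_def using a assms by simp
qed

lemma posx_plus: assumes "0 < n" "posx n p x + t < n" shows "posx n p (x + int t) = posx n p x + t"
proof -
  have a: "int (posx n p x) = (x - int p) mod int n" unfolding posx_def using assms by simp
  have lt: "int (posx n p x) + int t < int n" using assms by linarith
  have "((x - int p) mod int n + int t) mod int n = ((x - int p) + int t) mod int n"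
    by (rule mod_add_left_eq)
  then have "(x + int t - int p) mod int n = ((x - int p) mod int n + int t) mod int n"
    by (simp add: algebra_simps)
  also have "\<dots> = (x - int p) mod int n + int t"
    using a lt by (intro mod_pos_pos_trivial) (simp, linarith)
  finally show ?thesis unfolding posx_def using a assms by simp
qed

lemma posx_full: assumes "0 < n" "0 < posx n p x" shows "posx n p (x + int (n - posx n p x)) = 0"
proof -
  have a: "int (posx n p x) = (x - int p) mod int n" unfolding posx_def using assms by simp
  have lt: "posx n p x < n" using posx_lt assms by auto
  have "(x + int (n - posx n p x) - int p) mod int n = ((x - int p) + int n - (x - int p) mod int n) mod int n"
    using a lt by (simp add: of_nat_diff algebra_simps)
  also have "\<dots> = (int n * ((x - int p) div int n) + int n) mod int n"
    using minus_mod_eq_mult_div[of "x - int p" "int n"] by (metis add_diff_eq diff_add_eq)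
  also have "\<dots> = (int n * ((x - int p) div int n + 1)) mod int n"
    by (simp add: distrib_left)
  also have "\<dots> = 0" by simp
  finally show ?thesis unfolding posx_def by simp
qed

lemma at_nat: "i < n \<Longrightarrow> at n C (int i) = C i"
  unfolding at_def by (simp add: zmod_int)

lemma C_rot: assumes "0 < n" "i < n" shows "C i = rot n p C (posx n p (int i))"
  using at_rot[OF assms(1), of C "int i" p] at_nat[OF assms(2)] by simp

context
  fixes n p :: nat and C :: config
  assumes n0: "0 < n" and H: "\<forall>k<n. leader (rot n p C k) \<longleftrightarrow> k = 0"
begin

lemma leader_at: "leader (at n C x) \<longleftrightarrow> posx n p x = 0"
  using at_rot[OF n0] H posx_lt[OF n0] by metis

lemma distL_eq: "distL n C x = posx n p x"
  unfolding distL_def leader_at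
proof (rule Least_equality)
  show "posx n p (x - int (posx n p x)) = 0" using posx_minus[OF n0, of "posx n p x"] by simp
  fix y assume y: "posx n p (x - int y) = 0"
  show "posx n p x \<le> y"
  proof (rule ccontr)
    assume "\<not> ?thesis"
    then have "posx n p (x - int y) = posx n p x - y" using posx_minus[OF n0, of y] by simp
    with y \<open>\<not> ?thesis\<close> show False by simp
  qed
qed

lemma distR_eq: "distR n C x = (if posx n p x = 0 then 0 else n - posx n p x)"
proof (cases "posx n p x = 0")
  case True then show ?thesis unfolding distR_def leader_at by (simp add: Least_eq_0)
next
  case False
  then show ?thesis unfolding distR_def leader_at
  proof (simp, intro Least_equality)
    show "posx n p (x + int (n - posx n p x)) = 0" using posx_full[OF n0] False by simp
    fix y assume y: "posx n p (x + int y) = 0"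
    show "n - posx n p x \<le> y"
    proof (rule ccontr)
      assume a: "\<not> ?thesis"
      then have "posx n p (x + int y) = posx n p x + y" using posx_plus[OF n0, of p x y] by simp
      with y False show False by simp
    qed
  qed
qed

end

lemma S_to_Good:
  assumes n0: "0 < n" and S: "C \<in> S_RL n N"
  shows "\<exists>p<n. GoodR n N (rot n p C)"
proof -
  have V: "valid_config n N C" and NI: "C \<in> C_NI n N" and card: "card {i. i < n \<and> leader (C i)} = 1"
    using S unfolding S_RL_def by auto
  obtain p where P: "{i. i < n \<and> leader (C i)} = {p}" using card by (rule card_1_singletonE)
  have pn: "p < n" and Lp: "\<forall>i<n. leader (C i) \<longleftrightarrow> i = p" using P by blast+
  define D where "D = rot n p C"
  have Dk: "D k = C ((p + k) mod n)" for k unfolding D_def rot_def by simp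
  have D0: "D 0 = C p" using pn by (simp add: Dk)
  have pp: "posx n p (int p) = 0" using posx_rot[OF n0 n0, of p] pn by simp
  have H: "\<forall>k<n. leader (D k) \<longleftrightarrow> k = 0"
  proof (intro allI impI)
    fix k assume k: "k < n"
    have "(p + k) mod n = p \<longleftrightarrow> k = 0"
      using posx_rot[OF n0 k, of p] pp pn by (metis add.right_neutral mod_less)
    then show "leader (D k) \<longleftrightarrow> k = 0" using Lp Dk n0 by simp
  qed
  have at_D: "at n C x = D (posx n p x)" for x using at_rot[OF n0] D_def by simp
  have dL: "distL n C x = posx n p x" for x using distL_eq[OF n0] H D_def by simp
  have dR: "distR n C x = (if posx n p x = 0 then 0 else n - posx n p x)" for x
    using distR_eq[OF n0] H D_def by simp
  have sec: "\<forall>i<n. secure n N C (int i)" and mod: "\<forall>j<n. bullet (C j) = 2 \<longrightarrow> modest n C (int j)"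
    using NI unfolding C_NI_def by auto
  have G1: "\<forall>k<n. bullet (D k) \<le> 2 \<and> dist (D k) \<le> N"
    using V n0 unfolding valid_config_def valid_state_def Dk by simp
  have G2: "dist (D 0) = 0"
    using sec[rule_format, OF pn] H n0 unfolding secure_def at_D pp by auto
  have G3: "\<forall>k<n. 0 < k \<longrightarrow> dist (D k) + n \<le> N + k"
  proof (intro allI impI)
    fix k assume k: "k < n" "0 < k"
    define i where "i = (p + k) mod n"
    have i: "i < n" "posx n p (int i) = k" using posx_rot[OF n0 k(1)] n0 unfolding i_def by auto
    have "secure n N C (int i)" using sec i by auto
    then show "dist (D k) + n \<le> N + k" using H k i unfolding secure_def at_D dR by auto
  qed
  have G4: "\<forall>k<n. bullet (D k) = 2 \<longrightarrow> shield (D 0) \<and> (\<forall>j\<le>k. \<not> signal (D j) \<and> dist (D j) \<le> j)"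
  proof (intro allI impI)
    fix k assume k: "k < n" and b: "bullet (D k) = 2"
    define i where "i = (p + k) mod n"
    have i: "i < n" "posx n p (int i) = k" using posx_rot[OF n0 k(1)] n0 unfolding i_def by auto
    have "modest n C (int i)" using mod i b Dk i_def by auto
    then have m1: "shield (D (posx n p (int i - int k)))"
      and m2: "\<forall>t\<le>k. \<not> signal (D (posx n p (int i - int t))) \<and> dist (D (posx n p (int i - int t))) \<le> posx n p (int i - int t)"
      unfolding modest_def peaceful_def at_D dL i by auto
    have pm: "t \<le> k \<Longrightarrow> posx n p (int i - int t) = k - t" for t using posx_minus[OF n0, of t p "int i"] i by simp
    have "\<forall>j\<le>k. \<not> signal (D j) \<and> dist (D j) \<le> j"
    proof (intro allI impI)
      fix j assume "j \<le> k"
      then show "\<not> signal (D j) \<and> dist (D j) \<le> j" using m2[rule_format, of "k - j"] pm[of "k - j"] by simp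
    qed
    then show "shield (D 0) \<and> (\<forall>j\<le>k. \<not> signal (D j) \<and> dist (D j) \<le> j)"
      using m1 pm[of k] by simp
  qed
  show ?thesis using pn H G1 G2 G3 G4 unfolding D_def GoodR_def by blast
qed


lemma rot_posx: assumes "0 < n" "i < n" shows "(p + posx n p (int i)) mod n = i"
proof -
  have "int ((p + posx n p (int i)) mod n) = (int p + (int i - int p) mod int n) mod int n"
    unfolding posx_def using assms by (simp add: zmod_int)
  also have "\<dots> = int i mod int n" by (simp add: mod_add_right_eq)
  also have "\<dots> = int i" using assms by simp
  finally show ?thesis by linarith
qed

lemma Good_to_S:
  assumes n0: "0 < n" and pn: "p < n" and G: "GoodR n N (rot n p C)"
  shows "C \<in> S_RL n N"
proof -
  define D where "D = rot n p C"
  have H: "\<forall>k<n. leader (D k) \<longleftrightarrow> k = 0" and G1: "\<forall>k<n. bullet (D k) \<le> 2 \<and> dist (D k) \<le> N"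
    and G2: "dist (D 0) = 0" and G3: "\<forall>k<n. 0 < k \<longrightarrow> dist (D k) + n \<le> N + k"
    and G4: "\<forall>k<n. bullet (D k) = 2 \<longrightarrow> shield (D 0) \<and> (\<forall>j\<le>k. \<not> signal (D j) \<and> dist (D j) \<le> j)"
    using G unfolding GoodR_def D_def by blast+
  have at_D: "at n C x = D (posx n p x)" for x using at_rot[OF n0] D_def by simp
  have dL: "distL n C x = posx n p x" for x using distL_eq[OF n0] H D_def by simp
  have dR: "distR n C x = (if posx n p x = 0 then 0 else n - posx n p x)" for x
    using distR_eq[OF n0] H D_def by simp
  have ci: "i < n \<Longrightarrow> C i = D (posx n p (int i))" for i using C_rot[OF n0] D_def by simp
  have pl: "posx n p x < n" for x using posx_lt[OF n0] by simp
  have pp: "posx n p (int p) = 0" using posx_rot[OF n0 n0, of p] pn by simp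
  have Lp: "i < n \<Longrightarrow> leader (C i) \<longleftrightarrow> i = p" for i
  proof -
    assume i: "i < n"
    have "leader (C i) \<longleftrightarrow> posx n p (int i) = 0" using ci[OF i] H pl by simp
    also have "\<dots> \<longleftrightarrow> i = p" using rot_posx[OF n0 i, of p] pp pn by (metis add.right_neutral mod_less)
    finally show ?thesis .
  qed
  have V: "valid_config n N C" unfolding valid_config_def valid_state_def using ci G1 pl by simp
  have card: "card {i. i < n \<and> leader (C i)} = 1"
  proof -
    have "{i. i < n \<and> leader (C i)} = {p}" using Lp pn by auto
    then show ?thesis by simp
  qed
  have HL: "has_leader n C" unfolding has_leader_def using Lp pn by auto
  have sec: "\<forall>i<n. secure n N C (int i)"
  proof (intro allI impI)
    fix i assume i: "i < n"
    define k where "k = posx n p (int i)"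
    have k: "k < n" using pl k_def by simp
    show "secure n N C (int i)"
    proof (cases "k = 0")
      case True then show ?thesis unfolding secure_def at_D k_def[symmetric] using G2 H k by simp
    next
      case False
      then have "dist (D k) + n \<le> N + k" using G3 k by auto
      then show ?thesis unfolding secure_def at_D k_def[symmetric] dR using H k False by auto
    qed
  qed
  have mod: "\<forall>j<n. bullet (C j) = 2 \<longrightarrow> modest n C (int j)"
  proof (intro allI impI)
    fix i assume i: "i < n" and b: "bullet (C i) = 2"
    define k where "k = posx n p (int i)"
    have k: "k < n" using pl k_def by simp
    have bk: "bullet (D k) = 2" using b ci[OF i] k_def by simp
    have g: "shield (D 0)" "\<forall>j\<le>k. \<not> signal (D j) \<and> dist (D j) \<le> j" using G4 k bk by auto
    have pm: "t \<le> k \<Longrightarrow> posx n p (int i - int t) = k - t" for t using posx_minus[OF n0, of t p "int i"] k_def by simp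
    show "modest n C (int i)" unfolding modest_def peaceful_def at_D dL k_def[symmetric]
      using g pm by auto
  qed
  show ?thesis unfolding S_RL_def C_NI_def C_PB_def using V card HL sec mod
    by (auto simp: modest_def)
qed


lemma Good_leader:
  assumes n0: "0 < n" and pn: "p < n" and G: "GoodR n N (rot n p C)" and i: "i < n"
  shows "leader (C i) \<longleftrightarrow> i = p"
proof -
  have H: "\<forall>k<n. leader (rot n p C k) \<longleftrightarrow> k = 0" using G unfolding GoodR_def by blast
  have pp: "posx n p (int p) = 0" using posx_rot[OF n0 n0, of p] pn by simp
  have "leader (C i) \<longleftrightarrow> posx n p (int i) = 0" using C_rot[OF n0 i] H posx_lt[OF n0] by metis
  also have "\<dots> \<longleftrightarrow> i = p" using rot_posx[OF n0 i, of p] pp pn by (metis add.right_neutral mod_less)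
  finally show ?thesis .
qed

lemma GoodR_step:
  assumes G: "GoodR n N D" and n: "2 \<le> n" "n \<le> N" and k: "k < n"
  shows "GoodR n N (D(k := fst (delta N (D k) (D (Suc k mod n))), Suc k mod n := snd (delta N (D k) (D (Suc k mod n)))))"
proof -
  consider "k = n - 1" | "k = 0" | "0 < k" "Suc k < n" using k n by linarith
  then show ?thesis
  proof cases
    case 1
    then have "Suc k mod n = 0" using n by simp
    then show ?thesis using GoodR_A[OF G n] 1 by simp
  next
    case 2
    then have "Suc k mod n = 1" using n by simp
    then show ?thesis using GoodR_B0[OF G n] 2 by simp
  next
    case 3
    then have "Suc k mod n = Suc k" by simp
    then show ?thesis using GoodR_B[OF G n 3] by simp
  qed
qed

lemma GoodR_cong: assumes "0 < n" "\<forall>k<n. D1 k = D2 k" "GoodR n N D1" shows "GoodR n N D2"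
  using assms unfolding GoodR_def by auto

lemma step_rot:
  assumes n: "2 \<le> n" and pn: "p < n" and st: "ring_step n N C C'"
  shows "\<exists>k<n. \<forall>k'<n. rot n p C' k' = ((rot n p C)(k := fst (delta N (rot n p C k) (rot n p C (Suc k mod n))),
     Suc k mod n := snd (delta N (rot n p C k) (rot n p C (Suc k mod n))))) k'"
proof -
  have n0: "0 < n" using n by simp
  obtain i where i: "i < n" and C': "C' = C(i := fst (delta N (C i) (C (Suc i mod n))),
                   Suc i mod n := snd (delta N (C i) (C (Suc i mod n))))"
    using st unfolding ring_step_def by blast
  define k where "k = posx n p (int i)"
  have k: "k < n" using posx_lt[OF n0] k_def by simp
  have pk: "(p + k) mod n = i" using rot_posx[OF n0 i] k_def by simp
  have psk: "(p + Suc k mod n) mod n = Suc i mod n"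
  proof -
    have "(p + Suc k mod n) mod n = Suc (p + k) mod n" by (simp add: mod_add_right_eq)
    also have "\<dots> = Suc ((p + k) mod n) mod n" by (simp add: mod_Suc_eq)
    finally show ?thesis using pk by simp
  qed
  have skn: "Suc k mod n < n" using n0 by simp
  have Dk: "rot n p C k = C i" and Dsk: "rot n p C (Suc k mod n) = C (Suc i mod n)"
    unfolding rot_def using pk psk by auto
  have e1: "(p + k') mod n = i \<longleftrightarrow> k' = k" if "k' < n" for k'
    using posx_rot[OF n0 that, of p] pk k_def by auto
  have e2: "(p + k') mod n = Suc i mod n \<longleftrightarrow> k' = Suc k mod n" if "k' < n" for k'
    using posx_rot[OF n0 that, of p] posx_rot[OF n0 skn, of p] psk by auto
  show ?thesis
  proof (intro exI[of _ k] conjI k allI impI)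
    fix k' assume k': "k' < n"
    show "rot n p C' k' = ((rot n p C)(k := fst (delta N (rot n p C k) (rot n p C (Suc k mod n))),
     Suc k mod n := snd (delta N (rot n p C k) (rot n p C (Suc k mod n))))) k'"
      unfolding Dk Dsk using e1[OF k'] e2[OF k'] by (simp add: C' rot_def)
  qed
qed

lemma reach_Good:
  assumes n: "2 \<le> n" "n \<le> N" and pn: "p < n"
  shows "reachable n N C C' \<Longrightarrow> GoodR n N (rot n p C) \<Longrightarrow> GoodR n N (rot n p C')"
  unfolding reachable_def
proof (induction rule: rtranclp_induct)
  case base then show ?case .
next
  case (step y z)
  have G: "GoodR n N (rot n p y)" using step by simp
  obtain k where k: "k < n" and eq: "\<forall>k'<n. rot n p z k' = ((rot n p y)(k := fst (delta N (rot n p y k) (rot n p y (Suc k mod n))),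
     Suc k mod n := snd (delta N (rot n p y k) (rot n p y (Suc k mod n))))) k'"
    using step_rot[OF n(1) pn step(2)] by blast
  have "GoodR n N ((rot n p y)(k := fst (delta N (rot n p y k) (rot n p y (Suc k mod n))),
     Suc k mod n := snd (delta N (rot n p y k) (rot n p y (Suc k mod n)))))"
    by (rule GoodR_step[OF G n k])
  moreover have "\<forall>k'<n. ((rot n p y)(k := fst (delta N (rot n p y k) (rot n p y (Suc k mod n))),
     Suc k mod n := snd (delta N (rot n p y k) (rot n p y (Suc k mod n))))) k' = rot n p z k'"
    using eq by simp
  moreover have "0 < n" using n by simp
  ultimately show ?case using GoodR_cong by blast
qed

theorem lemma8:
  fixes n N :: nat
  assumes "2 \<le> n" and "n \<le> N"
  shows "closed_set n N (S_RL n N) \<and> (\<forall>C \<in> S_RL n N. safe n N C)"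
proof -
  have n0: "0 < n" using assms by simp
  have A: "closed_set n N (S_RL n N)" unfolding closed_set_def
  proof (intro ballI allI impI)
    fix C C' assume S: "C \<in> S_RL n N" and r: "reachable n N C C'"
    obtain p where pn: "p < n" and G: "GoodR n N (rot n p C)" using S_to_Good[OF n0 S] by blast
    show "C' \<in> S_RL n N" using Good_to_S[OF n0 pn reach_Good[OF assms pn r G]] .
  qed
  have B: "safe n N C" if S: "C \<in> S_RL n N" for C
  proof -
    obtain p where pn: "p < n" and G: "GoodR n N (rot n p C)" using S_to_Good[OF n0 S] by blast
    have c: "card {i. i < n \<and> leader (C i)} = 1" using S unfolding S_RL_def by simp
    show ?thesis unfolding safe_def
    proof (intro conjI c allI impI)
      fix C' i assume r: "reachable n N C C'" and i: "i < n"
      have G': "GoodR n N (rot n p C')" using reach_Good[OF assms pn r G] .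
      show "leader (C' i) = leader (C i)"
        using Good_leader[OF n0 pn G i] Good_leader[OF n0 pn G' i] by simp
    qed
  qed
  show ?thesis using A B by blast
qed

end
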